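(* For any $\mathbf{p},\mathbf{q}\in\mathbb{R}_{\ge0}^{G_\Delta}$ with $\|\mathbf{p}\|_1=\|\mathbf{q}\|_1$ and any $\sigma>0$, $\mathrm{EMD}(\tilde H^\sigma_{\mathbf{p}},\tilde H^\sigma_{\mathbf{q}})\le\mathrm{EMD}(\mathbf{p},\mathbf{q})$.
   Context: $G_\Delta=\{(i/\Delta,j/\Delta):i,j\in\{0,\dots,\Delta-1\}\}$ and $\tilde G_\Delta=\{(i/\Delta,j/\Delta):i,j\in\mathbb{Z}\}$. For $\mathbf{p}\in\mathbb{R}_{\ge0}^{G_\Delta}$ the infinite heatmap is $\tilde H^\sigma_{\mathbf{p}}(a)=\sum_{a'\in G_\Delta}\frac1Z e^{-\|a-a'\|_2^2/(2\sigma^2)}\mathbf{p}(a')$ for $a\in\tilde G_\Delta$, where $Z=\sum_{d\in\tilde G_\Delta}e^{-\|d\|_2^2/(2\sigma^2)}$. For nonnegative $\mu,\nu$ on a set of points in $\mathbb{R}^2$ with equal total mass, $\mathrm{EMD}(\mu,\nu)=\inf_\gamma\sum_{x,y}\gamma(x,y)\|x-y\|_1$ over nonnegative $\gamma$ with marginals $\mu$ and $\nu$. *)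

theory Defs
  imports "HOL-Analysis.Analysis"
begin

type_synonym pt = "real \<times> real"

definition grid :: "nat \<Rightarrow> pt set" where
  "grid \<Delta> = {(real i / real \<Delta>, real j / real \<Delta>) | i j. i < \<Delta> \<and> j < \<Delta>}"

definition igrid :: "nat \<Rightarrow> pt set" where
  "igrid \<Delta> = {(real_of_int i / real \<Delta>, real_of_int j / real \<Delta>) | i j. True}"

definition sqdist2 :: "pt \<Rightarrow> pt \<Rightarrow> real" where
  "sqdist2 a b = (fst a - fst b)^2 + (snd a - snd b)^2"

definition l1dist :: "pt \<Rightarrow> pt \<Rightarrow> real" where
  "l1dist a b = \<bar>fst a - fst b\<bar> + \<bar>snd a - snd b\<bar>"

definition Zc :: "nat \<Rightarrow> real \<Rightarrow> real" where
  "Zc \<Delta> \<sigma> = (\<Sum>\<^sub>\<infinity> d \<in> igrid \<Delta>. exp (- sqdist2 d (0,0) / (2 * \<sigma>^2)))"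

definition heatmap :: "nat \<Rightarrow> real \<Rightarrow> (pt \<Rightarrow> real) \<Rightarrow> pt \<Rightarrow> real" where
  "heatmap \<Delta> \<sigma> p a =
     (\<Sum>a'\<in>grid \<Delta>. exp (- sqdist2 a a' / (2 * \<sigma>^2)) / Zc \<Delta> \<sigma> * p a')"

text \<open>Transport plans are nonnegative
  (ennreal-valued) functions on S x S with marginals mu and nu; sums are unconditional
  sums of nonnegative terms, so the value lives in ennreal (infinite if no plan).\<close>
definition EMD :: "pt set \<Rightarrow> (pt \<Rightarrow> real) \<Rightarrow> (pt \<Rightarrow> real) \<Rightarrow> ennreal" where
  "EMD S \<mu> \<nu> = Inf { (\<Sum>\<^sub>\<infinity> xy \<in> S \<times> S. \<gamma> xy * ennreal (l1dist (fst xy) (snd xy))) | \<gamma>.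
       (\<forall>x\<in>S. (\<Sum>\<^sub>\<infinity> y\<in>S. \<gamma> (x, y)) = ennreal (\<mu> x)) \<and>
       (\<forall>y\<in>S. (\<Sum>\<^sub>\<infinity> x\<in>S. \<gamma> (x, y)) = ennreal (\<nu> y)) }"

end

theory Submission imports Defs begin

lemma igrid_add: assumes "x \<in> igrid D" "y \<in> igrid D" shows "x + y \<in> igrid D"
proof -
  obtain i j where x: "x = (of_int i / real D, of_int j / real D)" using assms(1) unfolding igrid_def by auto
  obtain i' j' where y: "y = (of_int i' / real D, of_int j' / real D)" using assms(2) unfolding igrid_def by auto
  show ?thesis unfolding igrid_def
    by (rule CollectI, intro exI[of _ "i+i'"] exI[of _ "j+j'"]) (simp add: x y add_divide_distrib)
qed

lemma igrid_diff: assumes "x \<in> igrid D" "y \<in> igrid D" shows "x - y \<in> igrid D"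
proof -
  obtain i j where x: "x = (of_int i / real D, of_int j / real D)" using assms(1) unfolding igrid_def by auto
  obtain i' j' where y: "y = (of_int i' / real D, of_int j' / real D)" using assms(2) unfolding igrid_def by auto
  show ?thesis unfolding igrid_def
    by (rule CollectI, intro exI[of _ "i-i'"] exI[of _ "j-j'"]) (simp add: x y diff_divide_distrib)
qed

lemma zero_igrid: "(0,0) \<in> igrid D"
  unfolding igrid_def by (rule CollectI, intro exI[of _ "0"]) simp

lemma grid_igrid: assumes "x \<in> grid D" shows "x \<in> igrid D"
proof -
  obtain i j where x: "x = (real i / real D, real j / real D)" using assms unfolding grid_def by auto
  show ?thesis unfolding igrid_def
    by (rule CollectI, intro exI[of _ "int i"] exI[of _ "int j"]) (simp add: x)
qed

lemma finite_grid: "finite (grid D)"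
proof -
  have "grid D \<subseteq> (\<lambda>(i,j). (real i / real D, real j / real D)) ` ({..<D} \<times> {..<D})"
    unfolding grid_def by auto
  then show ?thesis by (rule finite_subset) auto
qed

lemma summ_enn[simp]: "(f::'a \<Rightarrow> ennreal) summable_on A"
  by (rule nonneg_summable_on_complete) simp

lemma infsum_cmult_ennreal:
  fixes f :: "'a \<Rightarrow> ennreal"
  assumes "c < top"
  shows "infsum (\<lambda>x. c * f x) A = c * infsum f A"
proof -
  have "continuous_on UNIV (\<lambda>x::ennreal. c * x)"
    using ennreal_continuous_on_cmult[OF assms continuous_on_id] by simp
  then have "isCont (\<lambda>x::ennreal. c * x) (infsum f A)"
    by (simp add: continuous_on_eq_continuous_at)
  then have "infsum ((\<lambda>x. c * x) \<circ> f) A = c * infsum f A"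
    by (intro infsum_comm_additive_general) (auto simp: sum_distrib_left)
  then show ?thesis by (simp add: comp_def)
qed

lemma infsum_sum_ennreal:
  fixes f :: "'b \<Rightarrow> 'a \<Rightarrow> ennreal"
  assumes "finite F"
  shows "infsum (\<lambda>x. \<Sum>i\<in>F. f i x) A = (\<Sum>i\<in>F. infsum (f i) A)"
  using assms
proof (induction F rule: finite_induct)
  case empty then show ?case by simp
next
  case (insert i F)
  then show ?case by (simp add: infsum_add)
qed

lemma infsum_single_ennreal:
  fixes f :: "'a \<Rightarrow> ennreal"
  assumes "c \<in> A" "\<And>x. P x \<longleftrightarrow> x = c"
  shows "infsum (\<lambda>x. f x * (if P x then 1 else 0)) A = f c"
proof -
  have "infsum (\<lambda>x. f x * (if P x then 1 else 0)) A = infsum f {c}"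
    by (rule infsum_cong_neutral) (use assms in auto)
  then show ?thesis by simp
qed

lemma ennreal_infsum_real:
  fixes g :: "'a \<Rightarrow> real"
  assumes "g summable_on A" "\<And>x. x \<in> A \<Longrightarrow> g x \<ge> 0"
  shows "infsum (\<lambda>x. ennreal (g x)) A = ennreal (infsum g A)"
proof -
  have "infsum (ennreal \<circ> g) A = ennreal (infsum g A)"
    by (rule infsum_comm_additive_general)
       (use assms in \<open>auto simp: sum_ennreal subset_iff intro!: sum.cong\<close>)
  then show ?thesis by (simp add: comp_def)
qed

lemma kernel_sum:
  fixes \<sigma> :: real
  assumes summ: "(\<lambda>d. exp (- sqdist2 d (0,0) / (2*\<sigma>^2))) summable_on igrid D"
    and a: "a \<in> igrid D"
  shows "(\<Sum>\<^sub>\<infinity>x\<in>igrid D. ennreal (exp (- sqdist2 x a / (2*\<sigma>^2)) / Zc D \<sigma>)) = 1"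
proof -
  define g where "g = (\<lambda>d. exp (- sqdist2 d (0,0) / (2*\<sigma>^2)))"
  have "infsum g {(0,0)} \<le> infsum g (igrid D)"
    by (rule infsum_mono_neutral) (use summ zero_igrid in \<open>auto simp: g_def\<close>)
  then have Z1: "Zc D \<sigma> \<ge> 1" by (simp add: Zc_def g_def sqdist2_def)
  have 1: "(\<Sum>\<^sub>\<infinity>x\<in>igrid D. ennreal (exp (- sqdist2 x a / (2*\<sigma>^2)) / Zc D \<sigma>))
      = (\<Sum>\<^sub>\<infinity>x\<in>igrid D. ennreal (1 / Zc D \<sigma>) * ennreal (exp (- sqdist2 x a / (2*\<sigma>^2))))"
    using Z1 by (intro infsum_cong) (simp add: ennreal_mult[symmetric])
  also have "\<dots> = ennreal (1 / Zc D \<sigma>) * (\<Sum>\<^sub>\<infinity>x\<in>igrid D. ennreal (exp (- sqdist2 x a / (2*\<sigma>^2))))"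
    by (rule infsum_cmult_ennreal) simp
  also have "(\<Sum>\<^sub>\<infinity>x\<in>igrid D. ennreal (exp (- sqdist2 x a / (2*\<sigma>^2))))
      = (\<Sum>\<^sub>\<infinity>d\<in>igrid D. ennreal (g d))"
  proof -
    have I: "igrid D = (\<lambda>d. d + a) ` igrid D"
    proof (intro equalityI subsetI)
      fix x assume "x \<in> igrid D"
      then have "x - a \<in> igrid D" using igrid_diff a by blast
      moreover have "x = (x - a) + a" by simp
      ultimately show "x \<in> (\<lambda>d. d + a) ` igrid D" by blast
    qed (use igrid_add a in blast)
    have "(\<Sum>\<^sub>\<infinity>x\<in>igrid D. ennreal (exp (- sqdist2 x a / (2*\<sigma>^2))))
        = (\<Sum>\<^sub>\<infinity>x\<in>(\<lambda>d. d + a) ` igrid D. ennreal (exp (- sqdist2 x a / (2*\<sigma>^2))))"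
      using I by simp
    also have "\<dots> = (\<Sum>\<^sub>\<infinity>d\<in>igrid D. ennreal (exp (- sqdist2 (d + a) a / (2*\<sigma>^2))))"
      by (subst infsum_reindex) (auto simp: inj_on_def comp_def)
    also have "\<dots> = (\<Sum>\<^sub>\<infinity>d\<in>igrid D. ennreal (g d))"
      by (simp add: g_def sqdist2_def)
    finally show ?thesis .
  qed
  also have "(\<Sum>\<^sub>\<infinity>d\<in>igrid D. ennreal (g d)) = ennreal (Zc D \<sigma>)"
    unfolding Zc_def using summ by (subst ennreal_infsum_real) (auto simp: g_def)
  also have "ennreal (1 / Zc D \<sigma>) * ennreal (Zc D \<sigma>) = 1"
    using Z1 by (simp add: ennreal_mult[symmetric])
  finally show ?thesis .
qed

lemma transport:
  fixes \<sigma> :: real and \<gamma> :: "pt \<times> pt \<Rightarrow> ennreal"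
  assumes summ: "(\<lambda>d. exp (- sqdist2 d (0,0) / (2*\<sigma>^2))) summable_on igrid D"
    and pnn: "\<forall>a\<in>grid D. p a \<ge> 0" and qnn: "\<forall>a\<in>grid D. q a \<ge> 0"
    and m1: "\<forall>x\<in>grid D. (\<Sum>\<^sub>\<infinity>y\<in>grid D. \<gamma> (x, y)) = ennreal (p x)"
    and m2: "\<forall>y\<in>grid D. (\<Sum>\<^sub>\<infinity>x\<in>grid D. \<gamma> (x, y)) = ennreal (q y)"
  shows "EMD (igrid D) (heatmap D \<sigma> p) (heatmap D \<sigma> q)
           \<le> (\<Sum>\<^sub>\<infinity>xy\<in>grid D \<times> grid D. \<gamma> xy * ennreal (l1dist (fst xy) (snd xy)))"
proof -
  define I where "I = igrid D"
  define G where "G = grid D"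
  define K where "K = (\<lambda>x a. ennreal (exp (- sqdist2 x a / (2*\<sigma>^2)) / Zc D \<sigma>))"
  define \<Gamma> where "\<Gamma> = (\<lambda>xy. \<Sum>ab\<in>G\<times>G. \<gamma> ab * K (fst xy) (fst ab)
                  * (if snd xy = fst xy + (snd ab - fst ab) then 1 else 0))"
  have finG: "finite G" and finGG: "finite (G \<times> G)" using finite_grid G_def by auto
  have GI: "\<And>a. a \<in> G \<Longrightarrow> a \<in> I" using grid_igrid I_def G_def by blast
  have shI: "\<And>x ab. x \<in> I \<Longrightarrow> ab \<in> G \<times> G \<Longrightarrow> x + (snd ab - fst ab) \<in> I \<and> x - (snd ab - fst ab) \<in> I"
  proof -
    fix x ab assume x: "x \<in> I" and ab: "ab \<in> G \<times> G"
    then have "fst ab \<in> igrid D" "snd ab \<in> igrid D" "x \<in> igrid D" using GI I_def by auto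
    then have "snd ab - fst ab \<in> igrid D" using igrid_diff by blast
    then show "x + (snd ab - fst ab) \<in> I \<and> x - (snd ab - fst ab) \<in> I"
      using igrid_add igrid_diff \<open>x \<in> igrid D\<close> I_def by blast
  qed
  have Ksum: "\<And>a. a \<in> I \<Longrightarrow> (\<Sum>\<^sub>\<infinity>x\<in>I. K x a) = 1"
    unfolding K_def I_def using kernel_sum[OF summ] by blast
  have Z0: "Zc D \<sigma> \<ge> 0"
    unfolding Zc_def by (rule infsum_nonneg) simp
  have hm: "\<And>(r::pt \<Rightarrow> real) x. (\<forall>a\<in>G. r a \<ge> 0) \<Longrightarrow> ennreal (heatmap D \<sigma> r x) = (\<Sum>a\<in>G. ennreal (r a) * K x a)"
  proof -
    fix r :: "pt \<Rightarrow> real" and x assume r: "\<forall>a\<in>G. r a \<ge> 0"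
    have "ennreal (heatmap D \<sigma> r x) = (\<Sum>a\<in>G. ennreal (exp (- sqdist2 x a / (2 * \<sigma>^2)) / Zc D \<sigma> * r a))"
      unfolding heatmap_def G_def[symmetric]
      by (rule sum_ennreal[symmetric]) (use r Z0 in auto)
    also have "\<dots> = (\<Sum>a\<in>G. ennreal (r a) * K x a)"
      unfolding K_def
    proof (rule sum.cong[OF refl])
      fix a assume "a \<in> G"
      then have ra: "r a \<ge> 0" using r by auto
      have e: "exp (- sqdist2 x a / (2 * \<sigma>^2)) / Zc D \<sigma> \<ge> 0" using Z0 by simp
      show "ennreal (exp (- sqdist2 x a / (2 * \<sigma>^2)) / Zc D \<sigma> * r a)
          = ennreal (r a) * ennreal (exp (- sqdist2 x a / (2 * \<sigma>^2)) / Zc D \<sigma>)"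
        using ennreal_mult[OF e ra] by (simp add: mult.commute)
    qed
    finally show "ennreal (heatmap D \<sigma> r x) = (\<Sum>a\<in>G. ennreal (r a) * K x a)" .
  qed
  have gfin: "\<And>a b. a \<in> G \<Longrightarrow> b \<in> G \<Longrightarrow> \<gamma> (a, b) < top"
  proof -
    fix a b assume a: "a \<in> G" and b: "b \<in> G"
    have "\<gamma> (a, b) \<le> (\<Sum>b'\<in>G. \<gamma> (a, b'))"
      by (rule member_le_sum) (use b finG in auto)
    also have "\<dots> = ennreal (p a)" using m1 a finG G_def by simp
    finally show "\<gamma> (a, b) < top" by (simp add: le_less_trans)
  qed
  have marg1: "\<forall>x\<in>I. (\<Sum>\<^sub>\<infinity>y\<in>I. \<Gamma> (x, y)) = ennreal (heatmap D \<sigma> p x)"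
  proof
    fix x assume x: "x \<in> I"
    have "(\<Sum>\<^sub>\<infinity>y\<in>I. \<Gamma> (x, y)) = (\<Sum>ab\<in>G\<times>G. \<Sum>\<^sub>\<infinity>y\<in>I. (\<gamma> ab * K x (fst ab))
                  * (if y = x + (snd ab - fst ab) then 1 else 0))"
      unfolding \<Gamma>_def by (simp add: infsum_sum_ennreal[OF finGG])
    also have "\<dots> = (\<Sum>ab\<in>G\<times>G. \<gamma> ab * K x (fst ab))"
    proof (rule sum.cong[OF refl])
      fix ab assume "ab \<in> G \<times> G"
      then have "x + (snd ab - fst ab) \<in> I" using x shI by blast
      then show "(\<Sum>\<^sub>\<infinity>y\<in>I. (\<gamma> ab * K x (fst ab)) * (if y = x + (snd ab - fst ab) then 1 else 0))
           = \<gamma> ab * K x (fst ab)"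
        by (rule infsum_single_ennreal) simp
    qed
    also have "\<dots> = (\<Sum>a\<in>G. \<Sum>b\<in>G. \<gamma> (a, b) * K x a)"
      by (simp add: sum.cartesian_product case_prod_beta)
    also have "\<dots> = (\<Sum>a\<in>G. ennreal (p a) * K x a)"
    proof (rule sum.cong[OF refl])
      fix a assume a: "a \<in> G"
      have "(\<Sum>b\<in>G. \<gamma> (a, b) * K x a) = (\<Sum>b\<in>G. \<gamma> (a, b)) * K x a"
        by (simp add: sum_distrib_right)
      also have "(\<Sum>b\<in>G. \<gamma> (a, b)) = ennreal (p a)" using m1 a finG G_def by simp
      finally show "(\<Sum>b\<in>G. \<gamma> (a, b) * K x a) = ennreal (p a) * K x a" .
    qed
    also have "\<dots> = ennreal (heatmap D \<sigma> p x)"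
      using hm pnn G_def by simp
    finally show "(\<Sum>\<^sub>\<infinity>y\<in>I. \<Gamma> (x, y)) = ennreal (heatmap D \<sigma> p x)" .
  qed
  have marg2: "\<forall>y\<in>I. (\<Sum>\<^sub>\<infinity>x\<in>I. \<Gamma> (x, y)) = ennreal (heatmap D \<sigma> q y)"
  proof
    fix y assume y: "y \<in> I"
    have "(\<Sum>\<^sub>\<infinity>x\<in>I. \<Gamma> (x, y)) = (\<Sum>ab\<in>G\<times>G. \<Sum>\<^sub>\<infinity>x\<in>I. (\<gamma> ab * K x (fst ab))
                  * (if y = x + (snd ab - fst ab) then 1 else 0))"
      unfolding \<Gamma>_def by (simp add: infsum_sum_ennreal[OF finGG])
    also have "\<dots> = (\<Sum>ab\<in>G\<times>G. \<gamma> ab * K (y - (snd ab - fst ab)) (fst ab))"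
    proof (rule sum.cong[OF refl])
      fix ab assume "ab \<in> G \<times> G"
      then have "y - (snd ab - fst ab) \<in> I" using y shI by blast
      then show "(\<Sum>\<^sub>\<infinity>x\<in>I. (\<gamma> ab * K x (fst ab)) * (if y = x + (snd ab - fst ab) then 1 else 0))
           = \<gamma> ab * K (y - (snd ab - fst ab)) (fst ab)"
        by (rule infsum_single_ennreal[where f="\<lambda>x. \<gamma> ab * K x (fst ab)"]) (auto simp: algebra_simps)
    qed
    also have "\<dots> = (\<Sum>ab\<in>G\<times>G. \<gamma> ab * K y (snd ab))"
      by (rule sum.cong[OF refl]) (simp add: K_def sqdist2_def algebra_simps)
    also have "\<dots> = (\<Sum>a\<in>G. \<Sum>b\<in>G. \<gamma> (a, b) * K y b)"
      by (simp add: sum.cartesian_product case_prod_beta)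
    also have "\<dots> = (\<Sum>b\<in>G. \<Sum>a\<in>G. \<gamma> (a, b) * K y b)"
      by (rule sum.swap)
    also have "\<dots> = (\<Sum>b\<in>G. ennreal (q b) * K y b)"
    proof (rule sum.cong[OF refl])
      fix b assume b: "b \<in> G"
      have "(\<Sum>a\<in>G. \<gamma> (a, b) * K y b) = (\<Sum>a\<in>G. \<gamma> (a, b)) * K y b"
        by (simp add: sum_distrib_right)
      also have "(\<Sum>a\<in>G. \<gamma> (a, b)) = ennreal (q b)" using m2 b finG G_def by simp
      finally show "(\<Sum>a\<in>G. \<gamma> (a, b) * K y b) = ennreal (q b) * K y b" .
    qed
    also have "\<dots> = ennreal (heatmap D \<sigma> q y)"
      using hm qnn G_def by simp
    finally show "(\<Sum>\<^sub>\<infinity>x\<in>I. \<Gamma> (x, y)) = ennreal (heatmap D \<sigma> q y)" .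
  qed
  have per: "(\<Sum>\<^sub>\<infinity>xy\<in>I\<times>I. \<gamma> ab * K (fst xy) (fst ab)
                  * (if snd xy = fst xy + (snd ab - fst ab) then 1 else 0) * ennreal (l1dist (fst xy) (snd xy)))
            = \<gamma> ab * ennreal (l1dist (fst ab) (snd ab))" if ab: "ab \<in> G \<times> G" for ab
  proof -
    define d where "d = snd ab - fst ab"
    have dI: "\<And>x. x \<in> I \<Longrightarrow> x + d \<in> I" using ab shI d_def by blast
    have "(\<Sum>\<^sub>\<infinity>xy\<in>I\<times>I. \<gamma> ab * K (fst xy) (fst ab)
                  * (if snd xy = fst xy + d then 1 else 0) * ennreal (l1dist (fst xy) (snd xy)))
        = (\<Sum>\<^sub>\<infinity>xy\<in>(\<lambda>x. (x, x + d)) ` I. \<gamma> ab * K (fst xy) (fst ab) * ennreal (l1dist (fst xy) (snd xy)))"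
      by (rule infsum_cong_neutral) (use dI in auto)
    also have "\<dots> = (\<Sum>\<^sub>\<infinity>x\<in>I. \<gamma> ab * K x (fst ab) * ennreal (l1dist x (x + d)))"
      by (subst infsum_reindex) (auto simp: inj_on_def comp_def)
    also have "\<dots> = (\<Sum>\<^sub>\<infinity>x\<in>I. (\<gamma> ab * ennreal (l1dist (fst ab) (snd ab))) * K x (fst ab))"
      by (rule infsum_cong) (simp add: d_def l1dist_def algebra_simps abs_minus_commute)
    also have "\<dots> = (\<gamma> ab * ennreal (l1dist (fst ab) (snd ab))) * (\<Sum>\<^sub>\<infinity>x\<in>I. K x (fst ab))"
      by (rule infsum_cmult_ennreal) (use gfin ab in \<open>auto simp: ennreal_mult_less_top\<close>)
    also have "\<dots> = \<gamma> ab * ennreal (l1dist (fst ab) (snd ab))"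
      using Ksum GI ab by auto
    finally show ?thesis unfolding d_def .
  qed
  have cost: "(\<Sum>\<^sub>\<infinity>xy\<in>I\<times>I. \<Gamma> xy * ennreal (l1dist (fst xy) (snd xy)))
      = (\<Sum>\<^sub>\<infinity>xy\<in>G\<times>G. \<gamma> xy * ennreal (l1dist (fst xy) (snd xy)))"
  proof -
    have "(\<Sum>\<^sub>\<infinity>xy\<in>I\<times>I. \<Gamma> xy * ennreal (l1dist (fst xy) (snd xy)))
       = (\<Sum>\<^sub>\<infinity>xy\<in>I\<times>I. \<Sum>ab\<in>G\<times>G. \<gamma> ab * K (fst xy) (fst ab)
                  * (if snd xy = fst xy + (snd ab - fst ab) then 1 else 0) * ennreal (l1dist (fst xy) (snd xy)))"
      unfolding \<Gamma>_def by (simp add: sum_distrib_right)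
    also have "\<dots> = (\<Sum>ab\<in>G\<times>G. \<Sum>\<^sub>\<infinity>xy\<in>I\<times>I. \<gamma> ab * K (fst xy) (fst ab)
                  * (if snd xy = fst xy + (snd ab - fst ab) then 1 else 0) * ennreal (l1dist (fst xy) (snd xy)))"
      by (rule infsum_sum_ennreal[OF finGG])
    also have "\<dots> = (\<Sum>ab\<in>G\<times>G. \<gamma> ab * ennreal (l1dist (fst ab) (snd ab)))"
      by (rule sum.cong[OF refl]) (rule per)
    also have "\<dots> = (\<Sum>\<^sub>\<infinity>xy\<in>G\<times>G. \<gamma> xy * ennreal (l1dist (fst xy) (snd xy)))"
      using finGG by simp
    finally show ?thesis .
  qed
  show ?thesis
    unfolding EMD_def I_def[symmetric] G_def[symmetric]
    by (rule Inf_lower, rule CollectI, rule exI[of _ \<Gamma>]) (use marg1 marg2 cost in simp)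
qed

theorem lemma7:
  fixes \<Delta> :: nat and \<sigma> :: real and p q :: "pt \<Rightarrow> real"
  assumes "\<Delta> > 0"
    and "\<forall>a\<in>grid \<Delta>. p a \<ge> 0" and "\<forall>a\<in>grid \<Delta>. q a \<ge> 0"
    and "(\<Sum>a\<in>grid \<Delta>. \<bar>p a\<bar>) = (\<Sum>a\<in>grid \<Delta>. \<bar>q a\<bar>)"
    and "\<sigma> > 0"
  shows "EMD (igrid \<Delta>) (heatmap \<Delta> \<sigma> p) (heatmap \<Delta> \<sigma> q) \<le> EMD (grid \<Delta>) p q"
proof (cases "(\<lambda>d. exp (- sqdist2 d (0,0) / (2*\<sigma>^2))) summable_on igrid \<Delta>")
  case False
  then have Z0: "Zc \<Delta> \<sigma> = 0" unfolding Zc_def by (simp add: infsum_not_exists)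
  have h0: "\<And>r x. heatmap \<Delta> \<sigma> r x = 0" unfolding heatmap_def Z0 by simp
  have "EMD (igrid \<Delta>) (heatmap \<Delta> \<sigma> p) (heatmap \<Delta> \<sigma> q) \<le> 0"
    unfolding EMD_def h0
    by (rule Inf_lower, rule CollectI, rule exI[of _ "\<lambda>_. 0"]) simp
  then show ?thesis by simp
next
  case True
  show ?thesis
    unfolding EMD_def[of "grid \<Delta>"]
  proof (rule Inf_greatest)
    fix u assume "u \<in> {(\<Sum>\<^sub>\<infinity>xy\<in>grid \<Delta> \<times> grid \<Delta>. \<gamma> xy * ennreal (l1dist (fst xy) (snd xy))) |\<gamma>.
       (\<forall>x\<in>grid \<Delta>. (\<Sum>\<^sub>\<infinity>y\<in>grid \<Delta>. \<gamma> (x, y)) = ennreal (p x)) \<and>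
       (\<forall>y\<in>grid \<Delta>. (\<Sum>\<^sub>\<infinity>x\<in>grid \<Delta>. \<gamma> (x, y)) = ennreal (q y))}"
    then obtain \<gamma> where u: "u = (\<Sum>\<^sub>\<infinity>xy\<in>grid \<Delta> \<times> grid \<Delta>. \<gamma> xy * ennreal (l1dist (fst xy) (snd xy)))"
      and m1: "\<forall>x\<in>grid \<Delta>. (\<Sum>\<^sub>\<infinity>y\<in>grid \<Delta>. \<gamma> (x, y)) = ennreal (p x)"
      and m2: "\<forall>y\<in>grid \<Delta>. (\<Sum>\<^sub>\<infinity>x\<in>grid \<Delta>. \<gamma> (x, y)) = ennreal (q y)"
      by blast
    show "EMD (igrid \<Delta>) (heatmap \<Delta> \<sigma> p) (heatmap \<Delta> \<sigma> q) \<le> u"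
      unfolding u by (rule transport[OF True assms(2) assms(3) m1 m2])
  qed
qed

end
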